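(* Let $\mathbb{H}$ be a finite dimensional real Hilbert space, let $C\subseteq\mathbb{H}$ be a closed convex cone with dual cone $C^*:=\{y\in\mathbb{H}:\langle y,x\rangle\ge0\ \forall x\in C\}$, and let $f:C\to\mathbb{H}$ be a weakly homogeneous map of degree $\gamma>0$ with leading term $f^\infty$. Let $F:\mathbb{H}\to\mathbb{H}$ be a given continuous extension of $f$ and $F_C^{\mathrm{nat}}(x):=x-\Pi_C(x-F(x))$. Suppose: (a) $f^\infty$ is copositive on $C$; (b) for $x\in C$ with $\|x\|$ sufficiently large, there exists no $c>0$ such that $-x=c\,(f(x)-f^\infty(x))$; (c) $\lim_{x\in C,\|x\|\to\infty}\|F_C^{\mathrm{nat}}(x)\|=\infty$, and $\|f(x)-f^\infty(x)\|\le\|F_C^{\mathrm{nat}}(x)\|$ for all $x\in C$ with $\|x\|$ sufficiently large; (d) for all $x\in C$, $y\in C^*$ with $\langle x,y\rangle=0$, one has $\langle f(x),y\rangle\le 0$. Then for every $q\in C$, the equation $f(x)=q$ has a solution $x\in C$.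
   Context: A continuous map $h:C\to\mathbb{H}$ is positively homogeneous of degree $\gamma\ge 0$ if $h(\lambda x)=\lambda^\gamma h(x)$ for all $x\in C$, $\lambda>0$. A map $f:C\to\mathbb{H}$ is weakly homogeneous of degree $\gamma$ if $f=h+g$ where $h$ is continuous and positively homogeneous of degree $\gamma$ on $C$ and $g$ is continuous on $C$ with $\lim_{x\in C,\|x\|\to\infty} g(x)/\|x\|^\gamma=0$; the leading term is $f^\infty:=h$. A map $\psi$ is copositive on a set $D$ if $\langle \psi(x)-\psi(0),x\rangle\ge 0$ for all $x\in D$. $\Pi_C$ denotes the orthogonal projection onto $C$. *)

theory Defs
  imports "HOL-Analysis.Analysis"
begin

definition pos_homogeneous_on :: "'a::real_normed_vector set \<Rightarrow> real \<Rightarrow> ('a \<Rightarrow> 'a) \<Rightarrow> bool" where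
  "pos_homogeneous_on C \<gamma> h \<longleftrightarrow>
     (\<forall>x\<in>C. \<forall>t>0. h (t *\<^sub>R x) = (t powr \<gamma>) *\<^sub>R h x)"

definition weakly_homogeneous_with :: "'a::real_normed_vector set \<Rightarrow> real \<Rightarrow> ('a \<Rightarrow> 'a) \<Rightarrow> ('a \<Rightarrow> 'a) \<Rightarrow> bool" where
  "weakly_homogeneous_with C \<gamma> f h \<longleftrightarrow>
     (\<exists>g. (\<forall>x\<in>C. f x = h x + g x) \<and>
          continuous_on C h \<and> pos_homogeneous_on C \<gamma> h \<and>
          continuous_on C g \<and>
          ((\<lambda>x. (1 / norm x powr \<gamma>) *\<^sub>R g x) \<longlongrightarrow> 0) (inf at_infinity (principal C)))"

definition copositive_on :: "'a::real_inner set \<Rightarrow> ('a \<Rightarrow> 'a) \<Rightarrow> bool" where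
  "copositive_on D \<psi> \<longleftrightarrow> (\<forall>x\<in>D. inner (\<psi> x - \<psi> 0) x \<ge> 0)"

definition dual_cone :: "'a::real_inner set \<Rightarrow> 'a set" where
  "dual_cone C = {y. \<forall>x\<in>C. inner y x \<ge> 0}"

definition natural_map :: "'a::euclidean_space set \<Rightarrow> ('a \<Rightarrow> 'a) \<Rightarrow> 'a \<Rightarrow> 'a" where
  "natural_map C F x = x - closest_point C (x - F x)"

end

theory Submission
  imports Defs
begin

lemma homotopic_canonI:
  fixes h :: "real \<times> 'a::real_normed_vector \<Rightarrow> 'b::real_normed_vector"
  assumes "continuous_on ({0..1} \<times> S) h" "h ` ({0..1} \<times> S) \<subseteq> T"
  shows "homotopic_with_canon (\<lambda>_. True) S T (\<lambda>x. h (0, x)) (\<lambda>x. h (1, x))"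
  unfolding homotopic_with_def
  apply (rule exI[of _ h])
  using assms by (auto simp: subtopology_Times[symmetric] image_subset_iff)

lemma essential_lemma:
  fixes \<Phi> :: "'a::euclidean_space \<Rightarrow> 'a"
  assumes R: "R > 0"
    and hom: "homotopic_with_canon (\<lambda>_. True) (sphere 0 R) (- {0}) id \<Phi>"
    and cont: "continuous_on (cball 0 R) \<Phi>"
  shows "\<exists>x\<in>cball 0 R. \<Phi> x = 0"
proof (rule ccontr)
  assume "\<not> ?thesis"
  then have nz: "\<Phi> ` cball 0 R \<subseteq> - {0}" by auto
  obtain c where c: "homotopic_with_canon (\<lambda>_. True) (sphere 0 R) (- {0}) \<Phi> (\<lambda>x. c)"
    using nullhomotopic_from_sphere_extension[where S="- {0}" and f=\<Phi> and a=0 and r=R] cont nz by blast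
  have h1: "homotopic_with_canon (\<lambda>_. True) (sphere 0 R) (- {0}) id (\<lambda>x. c)"
    using homotopic_with_trans[OF hom c] .
  define r where "r = (\<lambda>x::'a. (R / norm x) *\<^sub>R x)"
  have rc: "continuous_on (- {0}) r" unfolding r_def
    by (intro continuous_intros) auto
  have rim: "r \<in> (- {0}) \<rightarrow> sphere 0 R" unfolding r_def using R by auto
  have h2: "homotopic_with_canon (\<lambda>_. True) (sphere 0 R) (sphere 0 R) (r \<circ> id) (r \<circ> (\<lambda>x. c))"
    by (rule homotopic_with_compose_continuous_left[OF _ rc rim]) (use h1 in simp)
  have h3: "homotopic_with_canon (\<lambda>_. True) (sphere 0 R) (sphere 0 R) id (\<lambda>x. r c)"
  proof -
    have "homotopic_with_canon (\<lambda>_. True) (sphere 0 R) (sphere 0 R) id (r \<circ> id)"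
      by (rule homotopic_with_equal) (auto simp: r_def)
    from homotopic_with_trans[OF this h2] show ?thesis by (simp add: o_def)
  qed
  then have "contractible (sphere (0::'a) R)" unfolding contractible_def by blast
  then show False using R by (simp add: contractible_sphere)
qed


lemma proj_zero:
  fixes C :: "'a::euclidean_space set"
  assumes "closed C" "convex_cone C" "x = closest_point C (x - y)"
  shows "x \<in> C \<and> y \<in> dual_cone C \<and> inner x y = 0"
proof -
  have cvx: "convex C" and cn: "conic C" and ne: "C \<noteq> {}"
    using assms(2) by (auto simp: convex_cone_def)
  have xC: "x \<in> C" using closest_point_in_set[OF assms(1) ne, of "x - y"] assms(3) by simp
  have clo: "\<forall>z\<in>C. dist (x - y) x \<le> dist (x - y) z"
    using closest_point_le[OF assms(1)] assms(3) by metis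
  have key: "inner y (z - x) \<ge> 0" if "z \<in> C" for z
    using any_closest_point_dot[OF cvx assms(1) xC that clo] by (simp add: inner_minus_left)
  have 0: "0 \<in> C" using assms(2) by (rule convex_cone_contains_0)
  have 2: "2 *\<^sub>R x \<in> C" using cn xC by (simp add: conicD)
  have "inner y (0 - x) \<ge> 0" using key[OF 0] .
  moreover have "inner y (2 *\<^sub>R x - x) \<ge> 0" using key[OF 2] .
  ultimately have ip: "inner x y = 0" by (simp add: inner_commute algebra_simps inner_diff_right)
  have "inner y z \<ge> 0" if "z \<in> C" for z
  proof -
    have "x + z \<in> C" using assms(2) xC that by (simp add: convex_cone_add)
    from key[OF this] show ?thesis using ip by (simp add: inner_commute)
  qed
  then have "y \<in> dual_cone C" by (simp add: dual_cone_def)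
  with xC ip show ?thesis by simp
qed


lemma y_zero:
  fixes C :: "'a::euclidean_space set" and f :: "'a \<Rightarrow> 'a"
  assumes d: "\<forall>x\<in>C. \<forall>y\<in>dual_cone C. inner x y = 0 \<longrightarrow> inner (f x) y \<le> 0"
    and xC: "x \<in> C" and yD: "y \<in> dual_cone C" and ip: "inner x y = 0"
    and pC: "p \<in> C" and a: "a \<ge> 0" and b: "b \<ge> 0"
    and y: "y = a *\<^sub>R x + b *\<^sub>R f x - p"
  shows "y = 0"
proof -
  have 1: "inner (f x) y \<le> 0" using d xC yD ip by blast
  have 2: "inner y p \<ge> 0" using yD pC by (simp add: dual_cone_def)
  have "inner y y = a * inner x y + b * inner (f x) y - inner p y"
    by (subst (1) y) (simp add: inner_add_left inner_diff_left)
  also have "\<dots> \<le> 0"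
  proof -
    have "b * inner (f x) y \<le> 0" using 1 b by (simp add: mult_nonneg_nonpos)
    then show ?thesis using 2 ip by (simp add: inner_commute)
  qed
  finally show ?thesis by (metis inner_gt_zero_iff not_le)
qed

theorem corollary3p1:
  fixes C :: "'a::euclidean_space set"
    and f F finf :: "'a \<Rightarrow> 'a"
    and \<gamma> :: real
  assumes cone: "closed C" "convex_cone C"
    and gamma: "\<gamma> > 0"
    and whom: "weakly_homogeneous_with C \<gamma> f finf"
    and Fcont: "continuous_on UNIV F"
    and Fext: "\<forall>x\<in>C. F x = f x"
    and a: "copositive_on C finf"
    and b: "\<exists>R. \<forall>x\<in>C. norm x \<ge> R \<longrightarrow> \<not> (\<exists>c>0. - x = c *\<^sub>R (f x - finf x))"
    and c1: "filterlim (\<lambda>x. norm (natural_map C F x)) at_top (inf at_infinity (principal C))"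
    and c2: "\<exists>R. \<forall>x\<in>C. norm x \<ge> R \<longrightarrow> norm (f x - finf x) \<le> norm (natural_map C F x)"
    and d: "\<forall>x\<in>C. \<forall>y\<in>dual_cone C. inner x y = 0 \<longrightarrow> inner (f x) y \<le> 0"
  shows "\<forall>q\<in>C. \<exists>x\<in>C. f x = q"
proof
  fix q assume qC: "q \<in> C"
  have cvx: "convex C" and cn: "conic C" and ne: "C \<noteq> {}"
    using cone(2) by (auto simp: convex_cone_def)
  have C0: "0 \<in> C" using cone(2) by (rule convex_cone_contains_0)
  have ph: "pos_homogeneous_on C \<gamma> finf" using whom by (auto simp: weakly_homogeneous_with_def)
  have "finf (2 *\<^sub>R 0) = (2 powr \<gamma>) *\<^sub>R finf 0" using ph C0 by (auto simp: pos_homogeneous_on_def)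
  then have "(2 powr \<gamma> - 1) *\<^sub>R finf 0 = 0" by (simp add: algebra_simps)
  moreover have "2 powr \<gamma> > (1::real)" using gamma by simp
  ultimately have finf0: "finf 0 = 0" using gamma by auto
  have cop: "inner (finf x) x \<ge> 0" if "x \<in> C" for x
    using a that finf0 by (auto simp: copositive_on_def)
  obtain R1 where R1: "\<forall>x\<in>C. norm x \<ge> R1 \<longrightarrow> \<not> (\<exists>c>0. - x = c *\<^sub>R (f x - finf x))" using b by blast
  obtain R2 where R2: "\<forall>x\<in>C. norm x \<ge> R2 \<longrightarrow> norm (f x - finf x) \<le> norm (natural_map C F x)" using c2 by blast
  have "eventually (\<lambda>x. norm (natural_map C F x) > norm q) (inf at_infinity (principal C))"
    using c1 by (simp add: filterlim_at_top_dense)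
  then obtain R3 where R3: "\<forall>x. norm x \<ge> R3 \<longrightarrow> x \<in> C \<longrightarrow> norm (natural_map C F x) > norm q"
    by (auto simp: eventually_inf_principal eventually_at_infinity)
  define R where "R = max 1 (max R1 (max R2 R3))"
  have Rpos: "R > 0" unfolding R_def by simp
  have Rge: "R \<ge> R1" "R \<ge> R2" "R \<ge> R3" unfolding R_def by auto
  define P where "P = closest_point C"
  have Pc: "continuous_on S P" for S unfolding P_def
    using continuous_on_closest_point[OF cvx cone(1) ne] .
  define HA where "HA = (\<lambda>(s::real, x::'a). x - P (x - (F x - s *\<^sub>R q)))"
  define HB where "HB = (\<lambda>(t::real, x::'a). x - P (x - ((1 - t) *\<^sub>R x + t *\<^sub>R F x)))"
  have contHA: "continuous_on S HA" for S
    unfolding HA_def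
    by (auto intro!: continuous_intros continuous_on_compose2[OF Pc[of UNIV]] continuous_on_compose2[OF Fcont] simp: split_beta)
  have contHB: "continuous_on S HB" for S
    unfolding HB_def
    by (auto intro!: continuous_intros continuous_on_compose2[OF Pc[of UNIV]] continuous_on_compose2[OF Fcont] simp: split_beta)
  have nmq: "norm (natural_map C F x) > norm q" if "x \<in> C" "norm x = R" for x
    using R3 that Rge by auto
  have HA_nz: "HA (s, x) \<noteq> 0" if "s \<in> {0..1}" "x \<in> sphere 0 R" for s x
  proof
    assume "HA (s, x) = 0"
    then have "x = closest_point C (x - (F x - s *\<^sub>R q))" by (simp add: HA_def P_def)
    from proj_zero[OF cone this] have xC: "x \<in> C" and yD: "F x - s *\<^sub>R q \<in> dual_cone C"
      and ip: "inner x (F x - s *\<^sub>R q) = 0" by auto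
    have sqC: "s *\<^sub>R q \<in> C" using cn qC that(1) by (simp add: conicD)
    have "F x - s *\<^sub>R q = 0"
      by (rule y_zero[OF d xC yD _ sqC, of 0 1]) (use ip Fext xC in auto)
    then have fx: "F x = s *\<^sub>R q" by simp
    have "norm (natural_map C F x) = dist (closest_point C x) (closest_point C (x - s *\<^sub>R q))"
      using xC by (simp add: natural_map_def fx closest_point_self dist_norm)
    also have "\<dots> \<le> dist x (x - s *\<^sub>R q)" by (rule closest_point_lipschitz[OF cvx cone(1) ne])
    also have "\<dots> = \<bar>s\<bar> * norm q" by (simp add: dist_norm)
    also have "\<dots> \<le> norm q" using that(1) by (simp add: mult_left_le_one_le)
    finally show False using nmq[OF xC] that(2) by simp
  qed
  have HB_nz: "HB (t, x) \<noteq> 0" if "t \<in> {0..1}" "x \<in> sphere 0 R" for t x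
  proof
    assume "HB (t, x) = 0"
    then have "x = closest_point C (x - ((1 - t) *\<^sub>R x + t *\<^sub>R F x))" by (simp add: HB_def P_def)
    from proj_zero[OF cone this] have xC: "x \<in> C" and yD: "(1 - t) *\<^sub>R x + t *\<^sub>R F x \<in> dual_cone C"
      and ip: "inner x ((1 - t) *\<^sub>R x + t *\<^sub>R F x) = 0" by auto
    have y0: "(1 - t) *\<^sub>R x + t *\<^sub>R F x = 0"
      by (rule y_zero[OF d xC yD _ C0, of "1 - t" t]) (use ip Fext xC that(1) in auto)
    have xn: "norm x = R" using that by simp
    have tpos: "t > 0"
    proof (rule ccontr)
      assume "\<not> t > 0" then have "t = 0" using that(1) by simp
      then have "x = 0" using y0 by simp
      then show False using xn Rpos by simp
    qed
    define c where "c = (1 - t) / t"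
    have c0: "c \<ge> 0" using that(1) tpos by (simp add: c_def)
    have fx: "f x = - c *\<^sub>R x"
    proof -
      have "t *\<^sub>R f x = (t *\<^sub>R f x + (1 - t) *\<^sub>R x) - (1 - t) *\<^sub>R x" by simp
      also have "\<dots> = - (1 - t) *\<^sub>R x" using y0 Fext xC by (simp add: add.commute scaleR_diff_left)
      finally have "(1/t) *\<^sub>R (t *\<^sub>R f x) = (1/t) *\<^sub>R (- (1 - t) *\<^sub>R x)" by simp
      moreover have "inverse t * (t - 1) = - ((1 - t) * inverse t)" by (simp add: algebra_simps)
      ultimately show ?thesis using tpos by (simp add: c_def divide_inverse)
    qed
    have "(1 + c) *\<^sub>R x \<in> C" using cn xC c0 by (simp add: conicD)
    then have nm: "natural_map C F x = - c *\<^sub>R x"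
      using Fext xC fx by (simp add: natural_map_def closest_point_self algebra_simps)
    have "c \<noteq> 0"
    proof
      assume "c = 0" then show False using nmq[OF xC xn] nm by simp
    qed
    then have cpos: "c > 0" using c0 by simp
    define w where "w = finf x"
    have wx: "inner w x \<ge> 0" using cop[OF xC] by (simp add: w_def)
    have "norm (- c *\<^sub>R x - w) \<le> norm (- c *\<^sub>R x)"
      using R2 xC xn Rge nm fx unfolding w_def by (metis order_refl)
    then have "(norm (- c *\<^sub>R x - w))\<^sup>2 \<le> (norm (- c *\<^sub>R x))\<^sup>2"
      by (simp add: power_mono)
    moreover have "(norm (- c *\<^sub>R x - w))\<^sup>2 = c\<^sup>2 * inner x x + 2 * c * inner w x + inner w w"
      unfolding power2_norm_eq_inner
      by (simp add: inner_diff_left inner_diff_right inner_commute power2_eq_square algebra_simps)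
    moreover have "(norm (- c *\<^sub>R x))\<^sup>2 = c\<^sup>2 * inner x x"
      unfolding power2_norm_eq_inner by (simp add: power2_eq_square)
    ultimately have "c\<^sup>2 * inner x x + 2 * c * inner w x + inner w w \<le> c\<^sup>2 * inner x x"
      by linarith
    moreover have "2 * c * inner w x \<ge> 0" using cpos wx by simp
    ultimately have "inner w w \<le> 0" by linarith
    then have w0: "w = 0" by (metis inner_gt_zero_iff not_le)
    have "- x = (1 / c) *\<^sub>R (f x - finf x)"
      using fx w0 cpos by (simp add: w_def)
    then show False using R1 xC xn Rge cpos by force
  qed
  have hom1: "homotopic_with_canon (\<lambda>_. True) (sphere 0 R) (- {0}) (\<lambda>x. HB (0, x)) (\<lambda>x. HB (1, x))"
    by (rule homotopic_canonI[OF contHB]) (use HB_nz in auto)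
  have hom2: "homotopic_with_canon (\<lambda>_. True) (sphere 0 R) (- {0}) (\<lambda>x. HA (0, x)) (\<lambda>x. HA (1, x))"
    by (rule homotopic_canonI[OF contHA]) (use HA_nz in auto)
  have e1: "(\<lambda>x. HB (0, x)) = id" using C0 by (auto simp: HB_def P_def closest_point_self)
  have e2: "(\<lambda>x. HB (1, x)) = (\<lambda>x. HA (0, x))" by (auto simp: HB_def HA_def)
  have hom: "homotopic_with_canon (\<lambda>_. True) (sphere 0 R) (- {0}) id (\<lambda>x. HA (1, x))"
    using homotopic_with_trans[OF hom1[unfolded e2] hom2] e1 by simp
  have "continuous_on (cball 0 R) (\<lambda>x. HA (1, x))"
    by (rule continuous_on_compose2[OF contHA[of UNIV]]) (auto intro!: continuous_intros)
  from essential_lemma[OF Rpos hom this] obtain x where "HA (1, x) = 0" by blast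
  then have "x = closest_point C (x - (F x - q))" by (simp add: HA_def P_def)
  from proj_zero[OF cone this] have xC: "x \<in> C" and yD: "F x - q \<in> dual_cone C"
    and ip: "inner x (F x - q) = 0" by auto
  have "F x - q = 0"
    by (rule y_zero[OF d xC yD _ qC, of 0 1]) (use ip Fext xC in auto)
  then show "\<exists>x\<in>C. f x = q" using xC Fext by auto
qed

end
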